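(* Let $A$ be the random matrix defined in the context, with parameters $r\le k$ and $D$ satisfying $r\to\infty$, $D/r^2\to\infty$ and $(\log k)/D\to 0$. Then there is an absolute constant $c$ such that with probability $1-o(1)$ over $A$: (i) $\lambda_\delta(A)\le 1$ for $\delta=c\sqrt{(\log k)/D}$; and (ii) for every algorithm $\mathcal{A}$ that receives a document of $m=o(r^2)$ words generated from an unknown $x^*\in\mathcal{S}_k$ and outputs a subset of $[k]$, there exists $x^*\in\mathcal{S}_k$ with at most $r$ nonzero entries, all of them at least $1/r$, such that $\mathcal A$ outputs $\mathrm{supp}(x^* )$ with probability less than $3/4$ (for all sufficiently large parameters).
   Context: Random instance: let $S_1,\dots,S_k\subseteq[D]$ be independent uniformly random subsets of $[D]$ (each element included independently with probability $1/2$), and let $A\in\mathbb{R}^{D\times k}$ have $A_{ij}=1/|S_j|$ if $i\in S_j$ and $A_{ij}=0$ otherwise. $\mathcal{S}_k=\{z\in\mathbb{R}^k_{\ge0}:\sum_iz_i=1\}$. A document of $m$ words generated from $x\in\mathcal{S}_k$ consists of $m$ words drawn i.i.d. from the categorical distribution on $[D]$ with probabilities $Ax$. For a matrix $M$, $\|M\|_{\max}=\max_{i,j}|M_{ij}|$; $\lambda_\delta(A)$ is the optimal value of: minimize $\|B\|_{\max}$ over $B\in\mathbb{R}^{k\times D}$ subject to $\|BA-I_k\|_{\max}\le\delta$. *)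

theory Defs
  imports "HOL-Probability.Probability_Mass_Function" "HOL-Library.Extended_Real"
begin

text \<open>Conventions: [D] = {0..<D} (words), [k] = {0..<k} (topics).
  Matrices are functions nat => nat => real, only entries inside the index ranges matter.\<close>

definition topic_matrix :: "(nat \<Rightarrow> nat set) \<Rightarrow> nat \<Rightarrow> nat \<Rightarrow> real" where
  "topic_matrix S i j = (if i \<in> S j then 1 / real (card (S j)) else 0)"

definition max_norm :: "nat \<Rightarrow> nat \<Rightarrow> (nat \<Rightarrow> nat \<Rightarrow> real) \<Rightarrow> real" where
  "max_norm p q M = Max {\<bar>M i j\<bar> | i j. i < p \<and> j < q}"

definition mat_mult :: "nat \<Rightarrow> (nat \<Rightarrow> nat \<Rightarrow> real) \<Rightarrow> (nat \<Rightarrow> nat \<Rightarrow> real) \<Rightarrow> nat \<Rightarrow> nat \<Rightarrow> real" where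
  "mat_mult D B A i j = (\<Sum>l<D. B i l * A l j)"

definition id_mat :: "nat \<Rightarrow> nat \<Rightarrow> real" where
  "id_mat i j = (if i = j then 1 else 0)"

text \<open>lambda_delta(A): optimal value (in extended reals, +infinity if infeasible) of
  min ||B||_max s.t. ||BA - I_k||_max <= delta.\<close>
definition lambda_delta :: "nat \<Rightarrow> nat \<Rightarrow> real \<Rightarrow> (nat \<Rightarrow> nat \<Rightarrow> real) \<Rightarrow> ereal" where
  "lambda_delta k D \<delta> A = Inf {ereal (max_norm k D B) | B.
      max_norm k k (\<lambda>i j. mat_mult D B A i j - id_mat i j) \<le> \<delta>}"

definition prob_simplex :: "nat \<Rightarrow> (nat \<Rightarrow> real) set" where
  "prob_simplex k = {x. (\<forall>i<k. x i \<ge> 0) \<and> (\<forall>i\<ge>k. x i = 0) \<and> (\<Sum>i<k. x i) = 1}"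

definition supp :: "nat \<Rightarrow> (nat \<Rightarrow> real) \<Rightarrow> nat set" where
  "supp k x = {i. i < k \<and> x i \<noteq> 0}"

definition word_prob :: "nat \<Rightarrow> (nat \<Rightarrow> nat \<Rightarrow> real) \<Rightarrow> (nat \<Rightarrow> real) \<Rightarrow> nat \<Rightarrow> real" where
  "word_prob k A x l = (\<Sum>j<k. A l j * x j)"

definition documents :: "nat \<Rightarrow> nat \<Rightarrow> nat list set" where
  "documents D m = {w. length w = m \<and> set w \<subseteq> {..<D}}"

definition output_prob :: "nat \<Rightarrow> nat \<Rightarrow> nat \<Rightarrow> (nat \<Rightarrow> nat \<Rightarrow> real) \<Rightarrow>
    (nat list \<Rightarrow> nat set pmf) \<Rightarrow> (nat \<Rightarrow> real) \<Rightarrow> nat set \<Rightarrow> real" where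
  "output_prob k D m A alg x T =
     (\<Sum>w\<in>documents D m. (\<Prod>t<m. word_prob k A x (w ! t)) * pmf (alg w) T)"

definition subsets_prob :: "nat \<Rightarrow> nat \<Rightarrow> ((nat \<Rightarrow> nat set) \<Rightarrow> bool) \<Rightarrow> real" where
  "subsets_prob k D E =
     real (card {S \<in> PiE {..<k} (\<lambda>_. Pow {..<D}). E S})
       / real (card (PiE {..<k} (\<lambda>_. Pow {..<D})))"

end

theory Submission
  imports Defs "HOL-Probability.Probability"
begin

lemma documents_Suc:
  "documents D (Suc m) = (\<lambda>(l,w). l # w) ` ({..<D} \<times> documents D m)"
  unfolding documents_def
  apply (rule set_eqI)
  apply (case_tac x)
   apply auto
  done

lemma finite_documents: "finite (documents D m)"
proof (induction m)
  case 0
  have "documents D 0 = {[]}" by (auto simp: documents_def)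
  then show ?case by simp
next
  case (Suc m)
  then show ?case by (simp add: documents_Suc)
qed

lemma sum_documents_prod:
  fixes f :: "nat \<Rightarrow> real"
  shows "(\<Sum>w\<in>documents D m. \<Prod>t<m. f (w ! t)) = (\<Sum>l<D. f l) ^ m"
proof (induction m)
  case 0
  have "documents D 0 = {[]}" by (auto simp: documents_def)
  then show ?case by simp
next
  case (Suc m)
  have inj: "inj_on (\<lambda>(l,w). l # w) ({..<D} \<times> documents D m)"
    by (auto simp: inj_on_def)
  have "(\<Sum>w\<in>documents D (Suc m). \<Prod>t<Suc m. f (w ! t))
      = (\<Sum>(l,w)\<in>{..<D} \<times> documents D m. \<Prod>t<Suc m. f ((l#w) ! t))"
    unfolding documents_Suc by (subst sum.reindex[OF inj]) (simp add: case_prod_unfold)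
  also have "\<dots> = (\<Sum>(l,w)\<in>{..<D} \<times> documents D m. f l * (\<Prod>t<m. f (w ! t)))"
    by (intro sum.cong refl) (auto simp del: prod.lessThan_Suc simp add: prod.lessThan_Suc_shift)
  also have "\<dots> = (\<Sum>l<D. \<Sum>w\<in>documents D m. f l * (\<Prod>t<m. f (w ! t)))"
    by (simp add: sum.cartesian_product)
  also have "\<dots> = (\<Sum>l<D. f l) * (\<Sum>w\<in>documents D m. \<Prod>t<m. f (w ! t))"
    by (simp add: sum_distrib_left sum_distrib_right sum.swap[of _ "documents D m"])
  finally show ?case using Suc by simp
qed

lemma pmf_two_le: "a \<noteq> b \<Longrightarrow> pmf M a + pmf M b \<le> 1"
proof -
  assume "a \<noteq> b"
  then have "pmf M a + pmf M b = measure (measure_pmf M) {a, b}"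
    by (subst measure_measure_pmf_finite) auto
  also have "\<dots> \<le> 1" by simp
  finally show ?thesis .
qed

lemma chi_identity:
  fixes P Q :: real
  assumes "P \<ge> 0" "P = 0 \<Longrightarrow> Q = 0"
  shows "(Q - P)^2 / P = Q^2 / P - 2 * Q + P"
proof (cases "P = 0")
  case True then show ?thesis using assms by simp
next
  case False then show ?thesis by (simp add: field_simps power2_eq_square)
qed

lemma abs_diff_le:
  fixes P Q :: real
  assumes "P \<ge> 0" "P = 0 \<Longrightarrow> Q = 0"
  shows "\<bar>Q - P\<bar> \<le> P / 4 + (Q - P)^2 / P"
proof (cases "P = 0")
  case True then show ?thesis using assms by simp
next
  case False
  then have P: "P > 0" using assms by simp
  have "0 \<le> (P/2 - \<bar>Q - P\<bar>)^2" by simp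
  then have "\<bar>Q - P\<bar> * P \<le> P * P / 4 + (Q - P)^2"
    by (simp add: power2_eq_square algebra_simps abs_mult_self_eq)
  then show ?thesis using P by (simp add: field_simps)
qed

lemma two_point:
  fixes p q :: "nat \<Rightarrow> real" and alg :: "nat list \<Rightarrow> nat set pmf"
  assumes p0: "\<And>l. l < D \<Longrightarrow> p l \<ge> 0" and q0: "\<And>l. l < D \<Longrightarrow> q l \<ge> 0"
    and ps: "(\<Sum>l<D. p l) = 1" and qs: "(\<Sum>l<D. q l) = 1"
    and pq: "\<And>l. l < D \<Longrightarrow> p l = 0 \<Longrightarrow> q l = 0"
    and chi: "(1 + (\<Sum>l<D. (q l - p l)^2 / p l)) ^ m < 5/4"
    and T: "T0 \<noteq> T1"
  shows "(\<Sum>w\<in>documents D m. (\<Prod>t<m. p (w ! t)) * pmf (alg w) T0)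
       + (\<Sum>w\<in>documents D m. (\<Prod>t<m. q (w ! t)) * pmf (alg w) T1) < 3/2"
proof -
  define P where "P w = (\<Prod>t<m. p (w ! t))" for w
  define Q where "Q w = (\<Prod>t<m. q (w ! t))" for w
  have wD: "w ! t < D" if "w \<in> documents D m" "t < m" for w t
  proof -
    have "length w = m" "set w \<subseteq> {..<D}" using that(1) by (auto simp: documents_def)
    then have "w ! t \<in> {..<D}" using nth_mem[of t w] that(2) by blast
    then show ?thesis by simp
  qed
  have P0: "P w \<ge> 0" if "w \<in> documents D m" for w
    unfolding P_def using that wD p0 by (intro prod_nonneg) auto
  have Q0: "Q w \<ge> 0" if "w \<in> documents D m" for w
    unfolding Q_def using that wD q0 by (intro prod_nonneg) auto
  have PQ: "Q w = 0" if "w \<in> documents D m" "P w = 0" for w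
  proof -
    from that obtain t where "t < m" "p (w ! t) = 0" by (auto simp: P_def)
    then have "q (w ! t) = 0" using pq wD that by blast
    then show ?thesis unfolding Q_def using \<open>t < m\<close> by (intro prod_zero) auto
  qed
  have sP: "(\<Sum>w\<in>documents D m. P w) = 1"
    unfolding P_def by (simp add: sum_documents_prod ps)
  have sQ: "(\<Sum>w\<in>documents D m. Q w) = 1"
    unfolding Q_def by (simp add: sum_documents_prod qs)
  have sl: "(\<Sum>l<D. q l ^ 2 / p l) = 1 + (\<Sum>l<D. (q l - p l)^2 / p l)"
  proof -
    have "(\<Sum>l<D. (q l - p l)^2 / p l) = (\<Sum>l<D. q l ^ 2 / p l - 2 * q l + p l)"
      using p0 pq by (intro sum.cong refl chi_identity) auto
    also have "\<dots> = (\<Sum>l<D. q l ^ 2 / p l) - 2 * (\<Sum>l<D. q l) + (\<Sum>l<D. p l)"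
      by (simp add: sum.distrib sum_subtractf sum_distrib_left)
    finally show ?thesis using ps qs by simp
  qed
  have "(\<Sum>w\<in>documents D m. (Q w - P w)^2 / P w) = (\<Sum>w\<in>documents D m. Q w ^ 2 / P w - 2 * Q w + P w)"
    using P0 PQ by (intro sum.cong refl chi_identity) auto
  also have "\<dots> = (\<Sum>w\<in>documents D m. Q w ^ 2 / P w) - 2 * (\<Sum>w\<in>documents D m. Q w) + (\<Sum>w\<in>documents D m. P w)"
    by (simp add: sum.distrib sum_subtractf sum_distrib_left)
  also have "(\<Sum>w\<in>documents D m. Q w ^ 2 / P w) = (\<Sum>w\<in>documents D m. \<Prod>t<m. q (w ! t) ^ 2 / p (w ! t))"
    unfolding P_def Q_def by (simp add: prod_dividef power_mult_distrib prod_power_distrib)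
  also have "\<dots> = (1 + (\<Sum>l<D. (q l - p l)^2 / p l)) ^ m"
    using sum_documents_prod[where f="\<lambda>l. q l ^ 2 / p l" and D=D and m=m] sl by simp
  finally have V: "(\<Sum>w\<in>documents D m. (Q w - P w)^2 / P w) < 1/4"
    using sP sQ chi by simp
  have "(\<Sum>w\<in>documents D m. P w * pmf (alg w) T0) + (\<Sum>w\<in>documents D m. Q w * pmf (alg w) T1)
      = (\<Sum>w\<in>documents D m. P w * pmf (alg w) T0 + Q w * pmf (alg w) T1)"
    by (simp add: sum.distrib)
  also have "\<dots> \<le> (\<Sum>w\<in>documents D m. P w * 5/4 + (Q w - P w)^2 / P w)"
  proof (intro sum_mono)
    fix w assume w: "w \<in> documents D m"
    have f: "pmf (alg w) T0 + pmf (alg w) T1 \<le> 1" using T by (rule pmf_two_le)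
    have "P w * pmf (alg w) T0 + Q w * pmf (alg w) T1
        = P w * (pmf (alg w) T0 + pmf (alg w) T1) + (Q w - P w) * pmf (alg w) T1"
      by (simp add: algebra_simps)
    also have "\<dots> \<le> P w * 1 + \<bar>Q w - P w\<bar> * 1"
    proof (intro add_mono mult_left_mono f P0 w)
      have "(Q w - P w) * pmf (alg w) T1 \<le> \<bar>Q w - P w\<bar> * pmf (alg w) T1"
        by (intro mult_right_mono) auto
      also have "\<dots> \<le> \<bar>Q w - P w\<bar> * 1" by (intro mult_left_mono pmf_le_1) auto
      finally show "(Q w - P w) * pmf (alg w) T1 \<le> \<bar>Q w - P w\<bar> * 1" .
    qed
    also have "\<dots> \<le> P w * 5/4 + (Q w - P w)^2 / P w"
      using abs_diff_le[of "P w" "Q w"] P0[OF w] PQ[OF w] by simp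
    finally show "P w * pmf (alg w) T0 + Q w * pmf (alg w) T1 \<le> P w * 5/4 + (Q w - P w)^2 / P w" .
  qed
  also have "\<dots> = (\<Sum>w\<in>documents D m. P w) * 5/4 + (\<Sum>w\<in>documents D m. (Q w - P w)^2 / P w)"
    by (simp add: sum.distrib sum_distrib_right sum_divide_distrib)
  also have "\<dots> < 3/2" using sP V by simp
  finally show ?thesis unfolding P_def Q_def .
qed

lemma term_bound:
  fixes a q r D b :: real
  assumes r: "r \<ge> 2" and a0: "a \<ge> 0" and q0: "q \<ge> 0" and aD: "a \<le> 4 / D" and D: "D > 0"
    and qb: "q \<ge> b / ((r - 1) * D)" and b0: "b \<ge> 0"
  shows "(q - (a + (r-1) * q) / r)^2 / ((a + (r-1) * q) / r)
         \<le> q / (r * (r - 1)) + (if b \<le> (r - 1) / 4 then 4 / (D * r) else 64 / (D * r * (r - 1)))"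
proof -
  define s where "s = a + (r - 1) * q"
  have s0: "s \<ge> 0" using a0 q0 r by (simp add: s_def)
  have eq: "(q - s / r)^2 / (s / r) = (q - a)^2 / (r * s)"
  proof (cases "s = 0")
    case True then show ?thesis by simp
  next
    case False
    have "q - s / r = (q - a) / r" using r by (simp add: s_def field_simps)
    then have "(q - s / r)^2 / (s / r) = ((q - a) / r)^2 / (s / r)" by simp
    also have "\<dots> = (q - a)^2 / (r * s)" using False r by (simp add: power2_eq_square)
    finally show ?thesis .
  qed
  have sq: "(q - a)^2 \<le> q^2 + a^2" using a0 q0 by (simp add: power2_eq_square algebra_simps)
  have t1: "q^2 / (r * s) \<le> q / (r * (r - 1))"
  proof (cases "q = 0")
    case True then show ?thesis by simp
  next
    case False
    then have qp: "q > 0" using q0 by simp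
    have "r * ((r - 1) * q) \<le> r * s" using a0 r by (simp add: s_def)
    moreover have "0 < r * ((r - 1) * q)" using qp r by simp
    ultimately have "q^2 / (r * s) \<le> q^2 / (r * ((r-1) * q))"
      by (intro divide_left_mono) auto
    also have "\<dots> = q / (r * (r - 1))" using qp r by (simp add: field_simps power2_eq_square)
    finally show ?thesis .
  qed
  have t2a: "a^2 / (r * s) \<le> 4 / (D * r)"
  proof (cases "a = 0")
    case True then show ?thesis using D r by simp
  next
    case False
    then have ap: "a > 0" using a0 by simp
    have "r * a \<le> r * s" using q0 r by (simp add: s_def)
    then have "a^2 / (r * s) \<le> a^2 / (r * a)"
      using ap r by (intro divide_left_mono) auto
    also have "\<dots> = a / r" using ap r by (simp add: field_simps power2_eq_square)
    also have "\<dots> \<le> (4 / D) / r" using aD r by (intro divide_right_mono) auto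
    also have "\<dots> = 4 / (D * r)" by simp
    finally show ?thesis .
  qed
  have t2b: "a^2 / (r * s) \<le> 64 / (D * r * (r - 1))" if b: "b > (r - 1) / 4"
  proof -
    have qp: "q > 1 / (4 * D)"
    proof -
      have "1 / (4 * D) = ((r-1)/4) / ((r-1) * D)" using r D by (simp add: field_simps)
      also have "\<dots> < b / ((r-1) * D)" using b r D by (intro divide_strict_right_mono) auto
      finally show ?thesis using qb by simp
    qed
    have "0 < 1 / (4 * D)" using D by simp
    then have "q > 0" using qp by linarith
    then have pos: "r * ((r - 1) * q) > 0" using r by simp
    have "r * ((r - 1) * q) \<le> r * s" using a0 r by (simp add: s_def)
    then have "a^2 / (r * s) \<le> a^2 / (r * ((r - 1) * q))"
      using pos by (intro divide_left_mono) auto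
    also have "\<dots> \<le> (4/D)^2 / (r * ((r - 1) * (1 / (4 * D))))"
    proof (intro frac_le)
      show "a^2 \<le> (4/D)^2" using a0 aD by (intro power_mono) auto
      show "0 < r * ((r - 1) * (1 / (4 * D)))" using r D by auto
      show "r * ((r - 1) * (1 / (4 * D))) \<le> r * ((r - 1) * q)" using qp r
        by (intro mult_left_mono) auto
    qed simp
    also have "\<dots> = 64 / (D * r * (r - 1))" using r D by (simp add: field_simps power2_eq_square)
    finally show ?thesis .
  qed
  have "(q - a)^2 / (r * s) \<le> q^2 / (r * s) + a^2 / (r * s)"
    using sq r s0 by (simp add: add_divide_distrib[symmetric] divide_right_mono)
  also have "\<dots> \<le> q / (r * (r - 1)) + (if b \<le> (r - 1) / 4 then 4 / (D * r) else 64 / (D * r * (r - 1)))"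
    using t1 t2a t2b by (auto intro: add_mono)
  finally show ?thesis using eq by (simp add: s_def)
qed

lemma max_norm_le:
  assumes "p > 0" "q > 0" "\<And>i j. i < p \<Longrightarrow> j < q \<Longrightarrow> \<bar>M i j\<bar> \<le> c"
  shows "max_norm p q M \<le> c"
proof -
  have eq: "{\<bar>M i j\<bar> | i j. i < p \<and> j < q} = (\<lambda>(i,j). \<bar>M i j\<bar>) ` ({..<p} \<times> {..<q})"
    by auto
  have "(0, 0) \<in> {..<p} \<times> {..<q}" using assms by auto
  then have ne: "{\<bar>M i j\<bar> | i j. i < p \<and> j < q} \<noteq> {}" unfolding eq by blast
  show ?thesis unfolding max_norm_def
    using ne assms(3) by (subst Max_le_iff) (auto simp: eq)
qed

lemma col_sum:
  assumes "S j \<subseteq> {..<D}" "S j \<noteq> {}"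
  shows "(\<Sum>l<D. topic_matrix S l j) = 1"
proof -
  have fin: "finite (S j)" using assms(1) finite_subset by blast
  have "(\<Sum>l<D. topic_matrix S l j) = (\<Sum>l\<in>{..<D} \<inter> S j. 1 / real (card (S j)))"
    unfolding topic_matrix_def by (subst sum.inter_restrict) simp_all
  also have "{..<D} \<inter> S j = S j" using assms by auto
  finally show ?thesis using fin assms(2) by simp
qed

lemma part_i:
  fixes S :: "nat \<Rightarrow> nat set"
  assumes k: "k > 0" and D: "D > 0" and Ssub: "\<And>i. i < k \<Longrightarrow> S i \<subseteq> {..<D}"
    and big: "\<And>j. j < k \<Longrightarrow> real D \<le> 4 * real (card (S j))"
    and pair: "\<And>i j. i < k \<Longrightarrow> j < k \<Longrightarrow> i \<noteq> j \<Longrightarrow>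
                  \<bar>2 * real (card (S i \<inter> S j)) - real (card (S j))\<bar> \<le> t"
    and \<delta>: "4 * t / real D \<le> \<delta>" "\<delta> \<ge> 0"
  shows "lambda_delta k D \<delta> (topic_matrix S) \<le> 1"
proof -
  define B where "B i l = (if l \<in> S i then 1 else (-1::real))" for i l
  have fin: "finite (S j)" if "j < k" for j using Ssub[OF that] finite_subset by blast
  have cpos: "card (S j) > 0" if "j < k" for j
  proof -
    have "real D > 0" using D by simp
    then have "real (card (S j)) > 0" using big[OF that] by linarith
    then show ?thesis by simp
  qed
  have mm: "mat_mult D B (topic_matrix S) i j
      = (2 * real (card (S i \<inter> S j)) - real (card (S j))) / real (card (S j))"
    if ij: "i < k" "j < k" for i j
  proof -
    have "mat_mult D B (topic_matrix S) i j = (\<Sum>l<D. if l \<in> S j then B i l / real (card (S j)) else 0)"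
      unfolding mat_mult_def topic_matrix_def by (rule sum.cong) auto
    also have "\<dots> = (\<Sum>l\<in>{..<D} \<inter> S j. B i l / real (card (S j)))"
      by (subst sum.inter_restrict) simp_all
    also have "{..<D} \<inter> S j = S j" using Ssub[OF ij(2)] by auto
    also have "(\<Sum>l\<in>S j. B i l / real (card (S j))) = (\<Sum>l\<in>S j. B i l) / real (card (S j))"
      by (simp add: sum_divide_distrib)
    also have "(\<Sum>l\<in>S j. B i l) = real (card (S j \<inter> S i)) - real (card (S j \<inter> - S i))"
      unfolding B_def by (simp add: sum.If_cases fin[OF ij(2)] Int_def)
    also have "real (card (S j \<inter> - S i)) = real (card (S j)) - real (card (S j \<inter> S i))"
    proof -
      have "card (S j) = card (S j \<inter> S i) + card (S j \<inter> - S i)"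
        using fin[OF ij(2)] by (subst card_Un_disjoint[symmetric]) (auto intro: arg_cong[where f=card])
      then show ?thesis by simp
    qed
    finally show ?thesis by (simp add: Int_commute)
  qed
  have Bn: "max_norm k D B \<le> 1"
    using k D by (intro max_norm_le) (auto simp: B_def)
  have BA: "max_norm k k (\<lambda>i j. mat_mult D B (topic_matrix S) i j - id_mat i j) \<le> \<delta>"
  proof (intro max_norm_le k)
    fix i j assume ij: "i < k" "j < k"
    show "\<bar>mat_mult D B (topic_matrix S) i j - id_mat i j\<bar> \<le> \<delta>"
    proof (cases "i = j")
      case True
      then show ?thesis using mm[OF ij] cpos[OF ij(2)] \<delta>(2) by (simp add: id_mat_def)
    next
      case False
      have c: "real (card (S j)) \<ge> real D / 4" using big[OF ij(2)] by simp
      have Dp: "real D / 4 > 0" using D by simp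
      have t0: "t \<ge> 0" using pair[OF ij False] by linarith
      have "\<bar>mat_mult D B (topic_matrix S) i j - id_mat i j\<bar>
           = \<bar>2 * real (card (S i \<inter> S j)) - real (card (S j))\<bar> / real (card (S j))"
        using False by (simp add: mm[OF ij] id_mat_def)
      also have "\<dots> \<le> t / (real D / 4)"
        using pair[OF ij False] c Dp t0 by (intro frac_le) auto
      also have "\<dots> = 4 * t / real D" by simp
      finally show ?thesis using \<delta>(1) by simp
    qed
  qed
  have "lambda_delta k D \<delta> (topic_matrix S) \<le> ereal (max_norm k D B)"
    unfolding lambda_delta_def using BA by (intro Inf_lower) blast
  also have "\<dots> \<le> 1" using Bn by simp
  finally show ?thesis .
qed

lemma sum_if_less:
  fixes g :: "nat \<Rightarrow> real"
  assumes "r \<le> k"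
  shows "(\<Sum>j<k. g j * (if j < r then c else 0)) = c * (\<Sum>j<r. g j)"
proof -
  have "(\<Sum>j<k. g j * (if j < r then c else 0)) = (\<Sum>j<k. if j < r then g j * c else 0)"
    by (rule sum.cong) auto
  also have "\<dots> = (\<Sum>j\<in>{..<k} \<inter> {j. j < r}. g j * c)"
    by (subst sum.inter_restrict) simp_all
  also have "{..<k} \<inter> {j. j < r} = {..<r}" using assms by auto
  finally show ?thesis by (simp add: sum_distrib_left mult.commute)
qed

lemma sum_if_bound:
  fixes x y :: real
  assumes "x \<ge> 0" "y \<ge> 0"
  shows "(\<Sum>l<D. if P l then x else y) \<le> real (card {l. l < D \<and> P l}) * x + real D * y"
proof -
  have "(\<Sum>l<D. if P l then x else y) = real (card ({..<D} \<inter> {l. P l})) * x + real (card ({..<D} \<inter> - {l. P l})) * y"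
    by (simp add: sum.If_cases)
  also have "{..<D} \<inter> {l. P l} = {l. l < D \<and> P l}" by auto
  also have "real (card ({..<D} \<inter> - {l. P l})) * y \<le> real D * y"
  proof (intro mult_right_mono assms)
    have "card ({..<D} \<inter> - {l. P l}) \<le> card {..<D}" by (intro card_mono) auto
    then show "real (card ({..<D} \<inter> - {l. P l})) \<le> real D" by simp
  qed
  finally show ?thesis by simp
qed

lemma part_ii:
  fixes S :: "nat \<Rightarrow> nat set" and alg :: "nat list \<Rightarrow> nat set pmf"
  assumes r3: "3 \<le> r" and rk: "r \<le> k" and D: "D > 0"
    and Ssub: "\<And>i. i < k \<Longrightarrow> S i \<subseteq> {..<D}"
    and ne: "\<And>i. i < r \<Longrightarrow> S i \<noteq> {}"
    and big: "real D \<le> 4 * real (card (S (r - 1)))"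
    and bad: "real (card {l. l < D \<and> real (card {i. i < r - 1 \<and> l \<in> S i}) \<le> (real r - 1) / 4})
              \<le> 2 * real D / real r"
    and small: "(1 + 140 / real r ^ 2) ^ m < 5/4"
  shows "\<exists>x \<in> prob_simplex k.
                 card (supp k x) \<le> r \<and>
                 (\<forall>i \<in> supp k x. x i \<ge> 1 / real r) \<and>
                 output_prob k D m (topic_matrix S) alg x (supp k x) < 3/4"
proof -
  define A where "A = topic_matrix S"
  define x0 where "x0 i = (if i < r then 1 / real r else 0)" for i
  define x1 where "x1 i = (if i < r - 1 then 1 / real (r - 1) else 0)" for i
  define p where "p l = word_prob k A x0 l" for l
  define q where "q l = word_prob k A x1 l" for l
  have rr: "real (r - 1) = real r - 1" using r3 by simp
  have rpos: "real r \<ge> 3" using r3 by simp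
  have A0: "A l j \<ge> 0" for l j by (simp add: A_def topic_matrix_def)
  have p_eq: "p l = (\<Sum>j<r. A l j) / real r" for l
    unfolding p_def word_prob_def x0_def using sum_if_less[OF rk] by simp
  have q_eq: "q l = (\<Sum>j<r - 1. A l j) / real (r - 1)" for l
    unfolding q_def word_prob_def x1_def using sum_if_less[of "r - 1" k] rk by simp
  have rsplit: "(\<Sum>j<r. A l j) = (\<Sum>j<r - 1. A l j) + A l (r - 1)" for l
  proof -
    have "r = Suc (r - 1)" using r3 by simp
    then have "(\<Sum>j<r. A l j) = (\<Sum>j<Suc (r - 1). A l j)" by simp
    then show ?thesis by simp
  qed
  have pq: "p l = (A l (r - 1) + (real r - 1) * q l) / real r" for l
    using rr r3 by (simp add: p_eq q_eq rsplit)
  have p0: "p l \<ge> 0" for l unfolding p_eq by (intro divide_nonneg_nonneg sum_nonneg A0) auto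
  have q0: "q l \<ge> 0" for l unfolding q_eq by (intro divide_nonneg_nonneg sum_nonneg A0) auto
  have cs: "(\<Sum>l<D. A l j) = 1" if "j < r" for j
    unfolding A_def using that rk by (intro col_sum Ssub ne) auto
  have ps: "(\<Sum>l<D. p l) = 1"
  proof -
    have "(\<Sum>l<D. p l) = (\<Sum>j<r. \<Sum>l<D. A l j) / real r"
      unfolding p_eq by (simp add: sum_divide_distrib[symmetric] sum.swap[of _ "{..<D}"])
    also have "\<dots> = 1" using cs r3 by simp
    finally show ?thesis .
  qed
  have qs: "(\<Sum>l<D. q l) = 1"
  proof -
    have "(\<Sum>l<D. q l) = (\<Sum>j<r - 1. \<Sum>l<D. A l j) / real (r - 1)"
      unfolding q_eq by (simp add: sum_divide_distrib[symmetric] sum.swap[of _ "{..<D}"])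
    also have "\<dots> = 1" using cs r3 by simp
    finally show ?thesis .
  qed
  have pq0: "q l = 0" if "p l = 0" for l
  proof -
    have "A l (r - 1) + (real r - 1) * q l = 0" using that pq[of l] r3 by simp
    moreover have "(real r - 1) * q l \<ge> 0" using q0 r3 by simp
    ultimately have "(real r - 1) * q l = 0" using A0[of l "r - 1"] by linarith
    then show ?thesis using r3 by simp
  qed
  define b where "b l = real (card {i. i < r - 1 \<and> l \<in> S i})" for l
  have aD: "A l (r - 1) \<le> 4 / real D" for l
  proof -
    have cp: "real (card (S (r - 1))) > 0" using big D by linarith
    have "A l (r - 1) \<le> 1 / real (card (S (r - 1)))"
      unfolding A_def topic_matrix_def using cp by auto
    also have "\<dots> \<le> 1 / (real D / 4)" using cp big D by (intro divide_left_mono) auto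
    finally show ?thesis by simp
  qed
  have qb: "q l \<ge> b l / ((real r - 1) * real D)" for l
  proof -
    have "b l / real D = (\<Sum>j<r - 1. if l \<in> S j then 1 / real D else 0)"
    proof -
      have "(\<Sum>j<r - 1. if l \<in> S j then 1 / real D else 0) = (\<Sum>j\<in>{..<r-1} \<inter> {j. l \<in> S j}. 1 / real D)"
        by (subst sum.inter_restrict) simp_all
      also have "{..<r-1} \<inter> {j. l \<in> S j} = {i. i < r - 1 \<and> l \<in> S i}" by auto
      finally show ?thesis by (simp add: b_def)
    qed
    also have "\<dots> \<le> (\<Sum>j<r - 1. A l j)"
    proof (intro sum_mono)
      fix j assume j: "j \<in> {..<r - 1}"
      then have jk: "j < k" using rk by auto
      have fin: "finite (S j)" using Ssub[OF jk] finite_subset by blast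
      have "card (S j) \<le> card {..<D}" using Ssub[OF jk] by (intro card_mono) auto
      then have cD: "real (card (S j)) \<le> real D" by simp
      show "(if l \<in> S j then 1 / real D else 0) \<le> A l j"
      proof (cases "l \<in> S j")
        case True
        then have "card (S j) > 0" using fin by (auto simp: card_gt_0_iff)
        then show ?thesis using True cD by (simp add: A_def topic_matrix_def frac_le)
      qed (simp add: A0)
    qed
    finally have "b l / real D \<le> (\<Sum>j<r - 1. A l j)" .
    then have "b l / real D / (real r - 1) \<le> q l"
      unfolding q_eq rr using r3 by (intro divide_right_mono) auto
    then show ?thesis by (simp add: mult.commute)
  qed
  define g where "g l = q l / (real r * (real r - 1)) + (if b l \<le> (real r - 1) / 4 then 4 / (real D * real r)
        else 64 / (real D * real r * (real r - 1)))" for l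
  have tb: "(q l - p l)^2 / p l \<le> g l" for l
    unfolding g_def pq using term_bound[of "real r" "A l (r-1)" "q l" "real D" "b l"] r3 A0 q0 aD D qb
    by (simp add: b_def)
  have chi: "(\<Sum>l<D. (q l - p l)^2 / p l) \<le> 140 / real r ^ 2"
  proof -
    have "(\<Sum>l<D. (q l - p l)^2 / p l) \<le> (\<Sum>l<D. g l)" by (intro sum_mono tb)
    also have "\<dots> = (\<Sum>l<D. q l) / (real r * (real r - 1)) + (\<Sum>l<D. if b l \<le> (real r - 1) / 4 then 4 / (real D * real r)
        else 64 / (real D * real r * (real r - 1)))"
      unfolding g_def by (simp add: sum.distrib sum_divide_distrib)
    also have "\<dots> \<le> 1 / (real r * (real r - 1)) + (real (card {l. l < D \<and> b l \<le> (real r - 1) / 4}) * (4 / (real D * real r))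
        + real D * (64 / (real D * real r * (real r - 1))))"
      unfolding qs using rpos by (intro add_mono order.refl sum_if_bound) auto
    also have "\<dots> \<le> 1 / (real r * (real r - 1)) + ((2 * real D / real r) * (4 / (real D * real r))
        + real D * (64 / (real D * real r * (real r - 1))))"
      using bad rpos D unfolding b_def by (intro add_mono order.refl mult_right_mono) auto
    also have "\<dots> = 65 / (real r * (real r - 1)) + 8 / real r ^ 2"
    proof -
      have Dp: "real D > 0" using D by simp
      have e1: "(2 * real D / real r) * (4 / (real D * real r)) = 8 / real r ^ 2"
        using Dp rpos by (simp add: field_simps power2_eq_square)
      have e2: "real D * (64 / (real D * real r * (real r - 1))) = 64 / (real r * (real r - 1))"
        using Dp by simp
      have e3: "1 / (real r * (real r - 1)) + 64 / (real r * (real r - 1)) = 65 / (real r * (real r - 1))"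
        by (simp add: add_divide_distrib[symmetric])
      show ?thesis using e1 e2 e3 by simp
    qed
    also have "\<dots> \<le> 130 / real r ^ 2 + 8 / real r ^ 2"
    proof -
      have "2 * real r \<le> real r * real r" using rpos by (intro mult_right_mono) auto
      then have "real r ^ 2 / 2 \<le> real r * (real r - 1)" by (simp add: power2_eq_square algebra_simps)
      moreover have "real r ^ 2 / 2 > 0" using rpos by simp
      ultimately have "65 / (real r * (real r - 1)) \<le> 65 / (real r ^ 2 / 2)"
        using r3 by (intro divide_left_mono) (auto intro!: mult_pos_pos)
      then show ?thesis by simp
    qed
    also have "\<dots> = 138 / real r ^ 2" by (simp add: add_divide_distrib[symmetric])
    also have "\<dots> \<le> 140 / real r ^ 2" by (rule divide_right_mono) auto
    finally show ?thesis .
  qed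
  have chi0: "0 \<le> (\<Sum>l<D. (q l - p l)^2 / p l)" using p0 by (intro sum_nonneg) auto
  have sm: "(1 + (\<Sum>l<D. (q l - p l)^2 / p l)) ^ m < 5/4"
    using power_mono[of "1 + (\<Sum>l<D. (q l - p l)^2 / p l)" "1 + 140 / real r ^ 2" m] chi chi0 small
    by simp
  have s0: "supp k x0 = {..<r}" using rk r3 by (auto simp: supp_def x0_def)
  have s1: "supp k x1 = {..<r - 1}" using rk r3 by (auto simp: supp_def x1_def)
  have T: "supp k x0 \<noteq> supp k x1"
  proof
    assume "supp k x0 = supp k x1"
    then have e: "{..<r} = {..<r - 1}" unfolding s0 s1 .
    have m: "r - 1 \<in> {..<r}" using r3 by simp
    have "r - 1 \<in> {..<r - 1}" using e m by (rule subst[where P="\<lambda>X. r - 1 \<in> X"])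
    then show False by simp
  qed
  have tp: "output_prob k D m A alg x0 (supp k x0) + output_prob k D m A alg x1 (supp k x1) < 3/2"
    unfolding output_prob_def p_def[symmetric] q_def[symmetric]
    using two_point[OF p0 q0 ps qs pq0 sm T] .
  have x0s: "x0 \<in> prob_simplex k"
  proof -
    have "(\<Sum>i<k. x0 i) = (\<Sum>i<k. 1 * (if i < r then 1 / real r else 0))"
      by (simp add: x0_def)
    also have "\<dots> = 1" using sum_if_less[OF rk, of "\<lambda>_. 1" "1 / real r"] r3 by simp
    finally show ?thesis unfolding prob_simplex_def using rk by (auto simp: x0_def)
  qed
  have x1s: "x1 \<in> prob_simplex k"
  proof -
    have "(\<Sum>i<k. x1 i) = (\<Sum>i<k. 1 * (if i < r - 1 then 1 / real (r - 1) else 0))"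
      by (simp add: x1_def)
    also have "\<dots> = 1" using sum_if_less[of "r - 1" k "\<lambda>_. 1" "1 / real (r - 1)"] rk r3 by simp
    finally show ?thesis unfolding prob_simplex_def using rk by (auto simp: x1_def)
  qed
  have r1: "1 / real r \<le> 1 / real (r - 1)" unfolding rr
  proof (rule divide_left_mono)
    show "real r - 1 \<le> real r" by simp
    show "0 \<le> (1::real)" by simp
    show "0 < real r * (real r - 1)" using rpos by simp
  qed
  have c0: "card (supp k x0) \<le> r" unfolding s0 by simp
  have c1: "card (supp k x1) \<le> r" unfolding s1 by simp
  have e0: "\<forall>i \<in> supp k x0. x0 i \<ge> 1 / real r" unfolding s0 by (simp add: x0_def)
  have e1: "\<forall>i \<in> supp k x1. x1 i \<ge> 1 / real r" unfolding s1 using r1 by (simp add: x1_def del: of_nat_diff)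
  show ?thesis
  proof (cases "output_prob k D m A alg x0 (supp k x0) < 3/4")
    case True
    then show ?thesis using x0s c0 e0 unfolding A_def by blast
  next
    case False
    then have "output_prob k D m A alg x1 (supp k x1) < 3/4" using tp by simp
    then show ?thesis using x1s c1 e1 unfolding A_def by blast
  qed
qed

lemma hoeffding_Pi_pmf:
  fixes g :: "'i \<Rightarrow> 'a \<Rightarrow> real" and p :: "'i \<Rightarrow> 'a pmf"
  assumes fin: "finite I" and J: "J \<subseteq> I" "J \<noteq> {}"
    and bnd: "\<And>i x. g i x \<in> {a..b}" and ab: "a < b" and \<epsilon>: "\<epsilon> \<ge> 0"
  defines "\<mu> \<equiv> (\<Sum>i\<in>J. measure_pmf.expectation (p i) (g i))"
  shows "measure (Pi_pmf I d p) {\<omega>. (\<Sum>i\<in>J. g i (\<omega> i)) \<ge> \<mu> + \<epsilon>}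
           \<le> exp (-2 * \<epsilon>\<^sup>2 / (real (card J) * (b - a)\<^sup>2))"
    and "measure (Pi_pmf I d p) {\<omega>. (\<Sum>i\<in>J. g i (\<omega> i)) \<le> \<mu> - \<epsilon>}
           \<le> exp (-2 * \<epsilon>\<^sup>2 / (real (card J) * (b - a)\<^sup>2))"
    and "measure (Pi_pmf I d p) {\<omega>. \<bar>(\<Sum>i\<in>J. g i (\<omega> i)) - \<mu>\<bar> \<ge> \<epsilon>}
           \<le> 2 * exp (-2 * \<epsilon>\<^sup>2 / (real (card J) * (b - a)\<^sup>2))"
proof -
  let ?M = "measure_pmf (Pi_pmf I d p)"
  have finJ: "finite J" using fin J finite_subset by blast
  have ind0: "prob_space.indep_vars ?M (\<lambda>_. count_space UNIV) (\<lambda>x f. f x) I"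
    by (rule indep_vars_Pi_pmf[OF fin])
  have ind1: "prob_space.indep_vars ?M (\<lambda>_. count_space UNIV) (\<lambda>x f. f x) J"
    by (rule prob_space.indep_vars_subset[OF measure_pmf.prob_space_axioms ind0 J(1)])
  have ind: "prob_space.indep_vars ?M (\<lambda>_. borel) (\<lambda>i \<omega>. g i (\<omega> i)) J"
    using prob_space.indep_vars_compose2[OF measure_pmf.prob_space_axioms ind1, of "\<lambda>i x. g i x" "\<lambda>_. borel"]
    by simp
  have exp_eq: "measure_pmf.expectation (Pi_pmf I d p) (\<lambda>\<omega>. g i (\<omega> i)) = measure_pmf.expectation (p i) (g i)"
    if "i \<in> J" for i
  proof -
    have "map_pmf (\<lambda>f. f i) (Pi_pmf I d p) = p i" using that J fin by (auto simp: Pi_pmf_component)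
    then have "measure_pmf.expectation (map_pmf (\<lambda>f. f i) (Pi_pmf I d p)) (g i) = measure_pmf.expectation (p i) (g i)"
      by simp
    then show ?thesis by simp
  qed
  have mu: "\<mu> = (\<Sum>i\<in>J. measure_pmf.expectation (Pi_pmf I d p) (\<lambda>\<omega>. g i (\<omega> i)))"
    unfolding \<mu>_def by (intro sum.cong refl exp_eq[symmetric])
  interpret H: Hoeffding_ineq ?M J "\<lambda>i \<omega>. g i (\<omega> i)" "\<lambda>_. a" "\<lambda>_. b" \<mu>
    by unfold_locales (use finJ ind bnd mu in auto)
  have pos: "(\<Sum>i\<in>J. (b - a)\<^sup>2) > 0" using finJ J ab by (simp add: card_gt_0_iff)
  have eq: "(\<Sum>i\<in>J. (b - a)\<^sup>2) = real (card J) * (b - a)\<^sup>2" by simp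
  show "measure (Pi_pmf I d p) {\<omega>. (\<Sum>i\<in>J. g i (\<omega> i)) \<ge> \<mu> + \<epsilon>}
           \<le> exp (-2 * \<epsilon>\<^sup>2 / (real (card J) * (b - a)\<^sup>2))"
    using H.Hoeffding_ineq_ge[OF \<epsilon> pos] unfolding eq by simp
  show "measure (Pi_pmf I d p) {\<omega>. (\<Sum>i\<in>J. g i (\<omega> i)) \<le> \<mu> - \<epsilon>}
           \<le> exp (-2 * \<epsilon>\<^sup>2 / (real (card J) * (b - a)\<^sup>2))"
    using H.Hoeffding_ineq_le[OF \<epsilon> pos] unfolding eq by simp
  show "measure (Pi_pmf I d p) {\<omega>. \<bar>(\<Sum>i\<in>J. g i (\<omega> i)) - \<mu>\<bar> \<ge> \<epsilon>}
           \<le> 2 * exp (-2 * \<epsilon>\<^sup>2 / (real (card J) * (b - a)\<^sup>2))"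
    using H.Hoeffding_ineq_abs_ge[OF \<epsilon> pos] unfolding eq by simp
qed

definition colset :: "nat \<Rightarrow> (nat \<Rightarrow> bool) set" where
  "colset k = PiE_dflt {..<k} False (\<lambda>_. UNIV)"

definition Omega :: "nat \<Rightarrow> nat \<Rightarrow> (nat \<Rightarrow> nat \<Rightarrow> bool) pmf" where
  "Omega k D = Pi_pmf {..<D} (\<lambda>_. False) (\<lambda>_. pmf_of_set (colset k))"

definition Tr :: "nat \<Rightarrow> nat \<Rightarrow> (nat \<Rightarrow> nat \<Rightarrow> bool) \<Rightarrow> nat \<Rightarrow> nat set" where
  "Tr k D \<omega> i = (if i < k then {l. l < D \<and> \<omega> l i} else undefined)"

lemma colset_finite: "finite (colset k)"
  unfolding colset_def by (intro finite_PiE_dflt) auto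

lemma colset_ne: "colset k \<noteq> {}"
proof -
  have "(\<lambda>_. False) \<in> colset k" by (simp add: colset_def PiE_dflt_def)
  then show ?thesis by blast
qed

lemma subsets_prob_eq:
  "subsets_prob k D E = measure (measure_pmf (Omega k D)) {\<omega>. E (Tr k D \<omega>)}"
proof -
  define \<Omega>s where "\<Omega>s = PiE_dflt {..<D} (\<lambda>_. False) (\<lambda>_. colset k)"
  define PS where "PS = PiE {..<k} (\<lambda>_. Pow {..<D})"
  have fO: "finite \<Omega>s" unfolding \<Omega>s_def using colset_finite by (intro finite_PiE_dflt) auto
  have z: "(\<lambda>_ _. False) \<in> \<Omega>s" unfolding \<Omega>s_def colset_def by (simp add: PiE_dflt_def)
  then have neO: "\<Omega>s \<noteq> {}" by blast
  have fP: "finite PS" unfolding PS_def by (intro finite_PiE) auto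
  have Om: "Omega k D = pmf_of_set \<Omega>s"
    unfolding Omega_def \<Omega>s_def using colset_finite colset_ne by (intro Pi_pmf_of_set) auto
  have inj: "inj_on (Tr k D) \<Omega>s"
  proof (rule inj_onI)
    fix \<omega> \<omega>' assume w: "\<omega> \<in> \<Omega>s" "\<omega>' \<in> \<Omega>s" and eq: "Tr k D \<omega> = Tr k D \<omega>'"
    show "\<omega> = \<omega>'"
    proof (intro ext)
      fix l i
      show "\<omega> l i = \<omega>' l i"
      proof (cases "l < D \<and> i < k")
        case True
        have "Tr k D \<omega> i = Tr k D \<omega>' i" using eq by simp
        then have "{l. l < D \<and> \<omega> l i} = {l. l < D \<and> \<omega>' l i}" using True by (simp add: Tr_def)
        then show ?thesis using True by blast
      next
        case False
        then show ?thesis using w by (cases "l < D") (auto simp: \<Omega>s_def PiE_dflt_def colset_def)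
      qed
    qed
  qed
  have img: "Tr k D ` \<Omega>s = PS"
  proof (intro equalityI subsetI)
    fix S assume "S \<in> Tr k D ` \<Omega>s"
    then show "S \<in> PS" by (auto simp: PS_def Tr_def PiE_def extensional_def)
  next
    fix S assume S: "S \<in> PS"
    define \<omega> where "\<omega> l i = (l < D \<and> i < k \<and> l \<in> S i)" for l i
    have "\<omega> \<in> \<Omega>s" by (auto simp: \<omega>_def \<Omega>s_def PiE_dflt_def colset_def)
    moreover have "Tr k D \<omega> = S"
    proof
      fix i show "Tr k D \<omega> i = S i"
        using S by (auto simp: Tr_def \<omega>_def PS_def PiE_def extensional_def)
    qed
    ultimately show "S \<in> Tr k D ` \<Omega>s" by blast
  qed
  have neP: "PS \<noteq> {}" using img neO by blast
  have "subsets_prob k D E = real (card (PS \<inter> {S. E S})) / real (card PS)"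
  proof -
    have "{S \<in> PS. E S} = PS \<inter> {S. E S}" by blast
    then show ?thesis unfolding subsets_prob_def PS_def by simp
  qed
  also have "\<dots> = measure (measure_pmf (pmf_of_set PS)) {S. E S}"
    using fP neP by (simp add: measure_pmf_of_set)
  also have "pmf_of_set PS = map_pmf (Tr k D) (pmf_of_set \<Omega>s)"
    using map_pmf_of_set_inj[OF inj neO fO] img by simp
  also have "measure (measure_pmf (map_pmf (Tr k D) (pmf_of_set \<Omega>s))) {S. E S}
      = measure (measure_pmf (Omega k D)) {\<omega>. E (Tr k D \<omega>)}"
    by (simp add: Om vimage_def)
  finally show ?thesis .
qed

lemma flip_sum:
  fixes h :: "(nat \<Rightarrow> bool) \<Rightarrow> real"
  assumes "i < k"
  shows "(\<Sum>c\<in>colset k. h (c(i := \<not> c i))) = (\<Sum>c\<in>colset k. h c)"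
proof -
  define fl where "fl c = c(i := \<not> c i)" for c :: "nat \<Rightarrow> bool"
  have inv: "fl (fl c) = c" for c by (auto simp: fl_def)
  have inj: "inj_on fl (colset k)"
  proof (rule inj_onI)
    fix x y assume "fl x = fl y"
    then have "fl (fl x) = fl (fl y)" by simp
    then show "x = y" by (simp add: inv)
  qed
  have img: "fl ` colset k = colset k"
  proof (intro equalityI subsetI)
    fix c assume "c \<in> fl ` colset k"
    then show "c \<in> colset k" using assms by (auto simp: fl_def colset_def PiE_dflt_def)
  next
    fix c assume c: "c \<in> colset k"
    then have "fl c \<in> colset k" using assms by (auto simp: fl_def colset_def PiE_dflt_def)
    then show "c \<in> fl ` colset k" using inv[of c] by (intro image_eqI[where x="fl c"]) auto
  qed
  have "(\<Sum>c\<in>colset k. h c) = (\<Sum>c\<in>fl ` colset k. h c)" using img by simp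
  also have "\<dots> = (\<Sum>c\<in>colset k. h (fl c))" by (rule sum.reindex[OF inj, unfolded comp_def])
  finally show ?thesis by (simp add: fl_def)
qed

lemma exp_ind:
  assumes "j < k"
  shows "measure_pmf.expectation (pmf_of_set (colset k)) (\<lambda>c. if c j then 1 else 0 :: real) = 1/2"
proof -
  let ?s = "(\<Sum>c\<in>colset k. if c j then 1 else 0 :: real)"
  have "(\<Sum>c\<in>colset k. if \<not> c j then 1 else 0 :: real) = ?s"
    using flip_sum[OF assms, of "\<lambda>c. if c j then 1 else 0"] by simp
  moreover have "?s + (\<Sum>c\<in>colset k. if \<not> c j then 1 else 0 :: real) = real (card (colset k))"
  proof -
    have "(\<Sum>c\<in>colset k. (if c j then 1 else 0) + (if \<not> c j then 1 else 0 :: real)) = (\<Sum>c\<in>colset k. 1)"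
      by (intro sum.cong) auto
    then show ?thesis by (simp add: sum.distrib)
  qed
  ultimately have "?s = real (card (colset k)) / 2" by simp
  moreover have "card (colset k) > 0" using colset_finite colset_ne by (simp add: card_gt_0_iff)
  ultimately show ?thesis
    using colset_finite colset_ne by (simp add: integral_pmf_of_set)
qed

lemma exp_pair:
  assumes "i < k" "i \<noteq> j"
  shows "measure_pmf.expectation (pmf_of_set (colset k))
           (\<lambda>c. if c j then (if c i then 1 else -1) else 0 :: real) = 0"
proof -
  let ?g = "\<lambda>c. if c j then (if c i then 1 else -1) else 0 :: real"
  have "(\<Sum>c\<in>colset k. ?g (c(i := \<not> c i))) = (\<Sum>c\<in>colset k. ?g c)"
    by (rule flip_sum[OF assms(1)])
  moreover have "(\<Sum>c\<in>colset k. ?g (c(i := \<not> c i))) = - (\<Sum>c\<in>colset k. ?g c)"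
  proof -
    have "(\<Sum>c\<in>colset k. ?g (c(i := \<not> c i))) = (\<Sum>c\<in>colset k. - ?g c)"
      by (intro sum.cong refl) (use assms(2) in auto)
    then show ?thesis by (simp add: sum_negf)
  qed
  ultimately have "(\<Sum>c\<in>colset k. ?g c) = 0" by simp
  then show ?thesis using colset_finite colset_ne by (simp add: integral_pmf_of_set)
qed

lemma prob_low:
  assumes r: "2 \<le> r" "r - 1 \<le> k"
  shows "measure (measure_pmf (pmf_of_set (colset k)))
           {c. real (card {i. i < r - 1 \<and> c i}) \<le> (real r - 1) / 4} \<le> exp (- (real r - 1) / 8)"
proof -
  have P: "pmf_of_set (colset k) = Pi_pmf {..<k} False (\<lambda>_. pmf_of_set (UNIV :: bool set))"
    unfolding colset_def by (subst Pi_pmf_of_set) auto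
  have e: "measure_pmf.expectation (pmf_of_set (UNIV :: bool set)) (\<lambda>x. if x then 1 else 0 :: real) = 1/2"
    by (simp add: integral_pmf_of_set UNIV_bool)
  have J: "{..<r-1} \<subseteq> {..<k}" "{..<r-1} \<noteq> {}" using r by (auto simp: lessThan_empty_iff)
  have cardsum: "real (card {i. i < r - 1 \<and> c i}) = (\<Sum>i\<in>{..<r-1}. if c i then 1 else 0 :: real)" for c
  proof -
    have "(\<Sum>i\<in>{..<r-1}. if c i then 1 else 0 :: real) = real (card ({..<r-1} \<inter> {i. c i}))"
      by (simp add: sum.If_cases)
    also have "{..<r-1} \<inter> {i. c i} = {i. i < r - 1 \<and> c i}" by auto
    finally show ?thesis by simp
  qed
  have rr: "real (r - 1) = real r - 1" using r by simp
  have H: "measure (measure_pmf (Pi_pmf {..<k} False (\<lambda>_. pmf_of_set (UNIV :: bool set))))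
      {\<omega>. (\<Sum>i\<in>{..<r-1}. if \<omega> i then 1 else 0 :: real)
            \<le> (\<Sum>i\<in>{..<r-1}. measure_pmf.expectation (pmf_of_set (UNIV :: bool set)) (\<lambda>x. if x then 1 else 0 :: real)) - (real r - 1) / 4}
      \<le> exp (-2 * ((real r - 1) / 4)\<^sup>2 / (real (card {..<r-1}) * (1 - 0)\<^sup>2))"
    by (rule hoeffding_Pi_pmf(2)) (use J r in auto)
  have set_eq: "{c. real (card {i. i < r - 1 \<and> c i}) \<le> (real r - 1) / 4}
      = {\<omega>. (\<Sum>i\<in>{..<r-1}. if \<omega> i then 1 else 0 :: real)
            \<le> (\<Sum>i\<in>{..<r-1}. measure_pmf.expectation (pmf_of_set (UNIV :: bool set)) (\<lambda>x. if x then 1 else 0 :: real)) - (real r - 1) / 4}"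
  proof -
    have "(\<Sum>i\<in>{..<r-1}. measure_pmf.expectation (pmf_of_set (UNIV :: bool set)) (\<lambda>x. if x then 1 else 0 :: real))
          - (real r - 1) / 4 = (real r - 1) / 4"
      using rr by (simp add: e)
    then show ?thesis by (simp only: cardsum)
  qed
  have "measure (measure_pmf (pmf_of_set (colset k)))
           {c. real (card {i. i < r - 1 \<and> c i}) \<le> (real r - 1) / 4}
      \<le> exp (-2 * ((real r - 1) / 4)\<^sup>2 / (real (card {..<r-1}) * (1 - 0)\<^sup>2))"
    using H unfolding set_eq P .
  also have "-2 * ((real r - 1) / 4)\<^sup>2 / (real (card {..<r-1}) * (1 - 0)\<^sup>2) = - (real r - 1) / 8"
    using rr r by (simp add: power2_eq_square field_simps)
  finally show ?thesis .
qed

lemma exp_indicator: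
  "measure_pmf.expectation M (\<lambda>c. if P c then 1 else 0 :: real) = measure (measure_pmf M) {c. P c}"
proof -
  have "(\<lambda>c. if P c then 1 else 0 :: real) = indicator {c. P c}" by (auto simp: indicator_def)
  then show ?thesis by simp
qed

lemma union_bound:
  fixes F :: "'i \<Rightarrow> 'a set"
  assumes "finite I"
  shows "measure (measure_pmf M) (\<Union>i\<in>I. F i) \<le> (\<Sum>i\<in>I. measure (measure_pmf M) (F i))"
  using measure_pmf.finite_measure_subadditive_finite[OF assms, of F] by simp

lemma good_prob:
  fixes r k D :: nat and t :: real
  assumes r3: "3 \<le> r" and rk: "r \<le> k" and D: "D > 0" and t: "t \<ge> 0"
  shows "measure (measure_pmf (Omega k D)) {\<omega>. \<not> (
      (\<forall>j<k. real D < 4 * (\<Sum>l<D. if \<omega> l j then 1 else 0)) \<and>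
      (\<forall>i<k. \<forall>j<k. i \<noteq> j \<longrightarrow> \<bar>\<Sum>l<D. if \<omega> l j then (if \<omega> l i then 1 else -1) else 0\<bar> < t) \<and>
      (\<Sum>l<D. if real (card {i. i < r - 1 \<and> \<omega> l i}) \<le> (real r - 1) / 4 then 1 else 0)
         < real D * exp (- (real r - 1) / 8) + real D / real r)}
    \<le> real k * exp (- real D / 8) + real k ^ 2 * (2 * exp (- t\<^sup>2 / (2 * real D)))
       + exp (- 2 * real D / real r ^ 2)"
proof -
  let ?M = "measure_pmf (Omega k D)"
  let ?P = "\<lambda>A. measure ?M A"
  define F1 where "F1 (j::nat) = {\<omega>::nat \<Rightarrow> nat \<Rightarrow> bool. (\<Sum>l<D. if \<omega> l j then 1 else 0 :: real) \<le> real D / 2 - real D / 4}" for j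
  define g2 where "g2 i j = (\<lambda>(l::nat) (c::nat \<Rightarrow> bool). if c j then (if c i then 1 else -1) else 0 :: real)" for i j
  define F2 where "F2 (ij::nat\<times>nat) = (if fst ij \<noteq> snd ij then
      {\<omega>::nat \<Rightarrow> nat \<Rightarrow> bool. \<bar>(\<Sum>l<D. g2 (fst ij) (snd ij) l (\<omega> l)) - 0\<bar> \<ge> t} else {})" for ij
  define h where "h (c::nat \<Rightarrow> bool) = (if real (card {i. i < r - 1 \<and> c i}) \<le> (real r - 1) / 4 then 1 else 0 :: real)" for c
  define \<mu>3 where "\<mu>3 = (\<Sum>l<D. measure_pmf.expectation (pmf_of_set (colset k)) h)"
  define F3 where "F3 = {\<omega>::nat \<Rightarrow> nat \<Rightarrow> bool. (\<Sum>l<D. h (\<omega> l)) \<ge> \<mu>3 + real D / real r}"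
  have Om: "Omega k D = Pi_pmf {..<D} (\<lambda>_. False) (\<lambda>_. pmf_of_set (colset k))" by (simp add: Omega_def)
  have Dne: "{..<D} \<noteq> {}" using D by auto
  have Dp: "real D > 0" using D by simp
  have P1: "?P (F1 j) \<le> exp (- real D / 8)" if j: "j < k" for j
  proof -
    have mu: "(\<Sum>l<D. measure_pmf.expectation (pmf_of_set (colset k)) (\<lambda>c. if c j then 1 else 0 :: real)) = real D / 2"
      using exp_ind[OF j] by simp
    have "?P (F1 j) \<le> exp (-2 * (real D / 4)\<^sup>2 / (real (card {..<D}) * (1 - 0)\<^sup>2))"
      unfolding F1_def Om mu[symmetric]
      by (rule hoeffding_Pi_pmf(2)[where g="\<lambda>_ c. if c j then 1 else 0"]) (use Dne Dp in auto)
    also have "-2 * (real D / 4)\<^sup>2 / (real (card {..<D}) * (1 - 0)\<^sup>2) = - real D / 8"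
      using Dp by (simp add: power2_eq_square field_simps)
    finally show ?thesis .
  qed
  have P2: "?P (F2 ij) \<le> 2 * exp (- t\<^sup>2 / (2 * real D))" if ij: "ij \<in> {..<k} \<times> {..<k}" for ij
  proof (cases "fst ij \<noteq> snd ij")
    case False then show ?thesis by (simp add: F2_def)
  next
    case True
    have i: "fst ij < k" using ij by auto
    have mu: "(\<Sum>l<D. measure_pmf.expectation (pmf_of_set (colset k)) (g2 (fst ij) (snd ij) l)) = 0"
      using exp_pair[OF i True] by (simp add: g2_def)
    have "?P (F2 ij) \<le> 2 * exp (-2 * t\<^sup>2 / (real (card {..<D}) * (1 - (-1))\<^sup>2))"
    proof -
      have eqF: "F2 ij = {\<omega>. \<bar>(\<Sum>l<D. g2 (fst ij) (snd ij) l (\<omega> l))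
          - (\<Sum>l<D. measure_pmf.expectation (pmf_of_set (colset k)) (g2 (fst ij) (snd ij) l))\<bar> \<ge> t}"
        using True mu by (simp add: F2_def)
      show ?thesis unfolding eqF Om
        by (rule hoeffding_Pi_pmf(3)) (use Dne Dp t in \<open>auto simp: g2_def\<close>)
    qed
    also have "-2 * t\<^sup>2 / (real (card {..<D}) * (1 - (-1))\<^sup>2) = - t\<^sup>2 / (2 * real D)"
      using Dp by (simp add: power2_eq_square field_simps)
    finally show ?thesis .
  qed
  have P3: "?P F3 \<le> exp (- 2 * real D / real r ^ 2)"
  proof -
    have "?P F3 \<le> exp (-2 * (real D / real r)\<^sup>2 / (real (card {..<D}) * (1 - 0)\<^sup>2))"
      unfolding F3_def Om \<mu>3_def
      by (rule hoeffding_Pi_pmf(1)[where g="\<lambda>_. h"]) (use Dne Dp r3 in \<open>auto simp: h_def\<close>)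
    also have "-2 * (real D / real r)\<^sup>2 / (real (card {..<D}) * (1 - 0)\<^sup>2) = - 2 * real D / real r ^ 2"
      using Dp r3 by (simp add: power2_eq_square field_simps)
    finally show ?thesis .
  qed
  have mu3: "\<mu>3 \<le> real D * exp (- (real r - 1) / 8)"
  proof -
    have "measure_pmf.expectation (pmf_of_set (colset k)) h \<le> exp (- (real r - 1) / 8)"
      unfolding h_def exp_indicator using prob_low[of r k] r3 rk by simp
    then show ?thesis unfolding \<mu>3_def using Dp by simp
  qed
  have sub: "{\<omega>. \<not> (
      (\<forall>j<k. real D < 4 * (\<Sum>l<D. if \<omega> l j then 1 else 0)) \<and>
      (\<forall>i<k. \<forall>j<k. i \<noteq> j \<longrightarrow> \<bar>\<Sum>l<D. if \<omega> l j then (if \<omega> l i then 1 else -1) else 0\<bar> < t) \<and>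
      (\<Sum>l<D. if real (card {i. i < r - 1 \<and> \<omega> l i}) \<le> (real r - 1) / 4 then 1 else 0)
         < real D * exp (- (real r - 1) / 8) + real D / real r)}
    \<subseteq> (\<Union>j\<in>{..<k}. F1 j) \<union> (\<Union>ij\<in>{..<k} \<times> {..<k}. F2 ij) \<union> F3"
  proof
    fix \<omega> assume "\<omega> \<in> {\<omega>. \<not> (
      (\<forall>j<k. real D < 4 * (\<Sum>l<D. if \<omega> l j then 1 else 0)) \<and>
      (\<forall>i<k. \<forall>j<k. i \<noteq> j \<longrightarrow> \<bar>\<Sum>l<D. if \<omega> l j then (if \<omega> l i then 1 else -1) else 0\<bar> < t) \<and>
      (\<Sum>l<D. if real (card {i. i < r - 1 \<and> \<omega> l i}) \<le> (real r - 1) / 4 then 1 else 0)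
         < real D * exp (- (real r - 1) / 8) + real D / real r)}"
    then consider
        (a) j where "j < k" "\<not> real D < 4 * (\<Sum>l<D. if \<omega> l j then 1 else 0 :: real)"
      | (b) i j where "i < k" "j < k" "i \<noteq> j"
            "\<not> \<bar>\<Sum>l<D. if \<omega> l j then (if \<omega> l i then 1 else -1) else 0 :: real\<bar> < t"
      | (c) "\<not> (\<Sum>l<D. if real (card {i. i < r - 1 \<and> \<omega> l i}) \<le> (real r - 1) / 4 then 1 else 0 :: real)
         < real D * exp (- (real r - 1) / 8) + real D / real r"
      by blast
    then show "\<omega> \<in> (\<Union>j\<in>{..<k}. F1 j) \<union> (\<Union>ij\<in>{..<k} \<times> {..<k}. F2 ij) \<union> F3"
    proof cases
      case a
      then have "\<omega> \<in> F1 j" unfolding F1_def by simp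
      then show ?thesis using a by blast
    next
      case b
      then have "\<omega> \<in> F2 (i, j)" unfolding F2_def g2_def fst_conv snd_conv by (simp add: not_less)
      then show ?thesis using b by blast
    next
      case c
      then have "\<omega> \<in> F3" unfolding F3_def h_def using mu3 by simp
      then show ?thesis by blast
    qed
  qed
  have "?P {\<omega>. \<not> (
      (\<forall>j<k. real D < 4 * (\<Sum>l<D. if \<omega> l j then 1 else 0)) \<and>
      (\<forall>i<k. \<forall>j<k. i \<noteq> j \<longrightarrow> \<bar>\<Sum>l<D. if \<omega> l j then (if \<omega> l i then 1 else -1) else 0\<bar> < t) \<and>
      (\<Sum>l<D. if real (card {i. i < r - 1 \<and> \<omega> l i}) \<le> (real r - 1) / 4 then 1 else 0)
         < real D * exp (- (real r - 1) / 8) + real D / real r)}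
     \<le> ?P ((\<Union>j\<in>{..<k}. F1 j) \<union> (\<Union>ij\<in>{..<k} \<times> {..<k}. F2 ij) \<union> F3)"
    using sub by (intro measure_pmf.finite_measure_mono) auto
  also have "\<dots> \<le> ?P (\<Union>j\<in>{..<k}. F1 j) + ?P (\<Union>ij\<in>{..<k} \<times> {..<k}. F2 ij) + ?P F3"
    by (intro order.trans[OF measure_Un_le] add_mono order.refl measure_Un_le)
       (auto simp: measure_pmf.emeasure_eq_measure)
  also have "\<dots> \<le> (\<Sum>j<k. ?P (F1 j)) + (\<Sum>ij\<in>{..<k} \<times> {..<k}. ?P (F2 ij)) + ?P F3"
    by (intro add_mono union_bound order.refl) auto
  also have "\<dots> \<le> (\<Sum>j<k. exp (- real D / 8)) + (\<Sum>ij\<in>{..<k} \<times> {..<k}. 2 * exp (- t\<^sup>2 / (2 * real D)))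
      + exp (- 2 * real D / real r ^ 2)"
    by (intro add_mono sum_mono P1 P2 P3) auto
  also have "\<dots> = real k * exp (- real D / 8) + real k ^ 2 * (2 * exp (- t\<^sup>2 / (2 * real D)))
       + exp (- 2 * real D / real r ^ 2)"
    by (simp add: card_cartesian_product power2_eq_square)
  finally show ?thesis .
qed

lemma cnt:
  fixes D :: nat and P :: "nat \<Rightarrow> bool"
  shows "real (card {l. l < D \<and> P l}) = (\<Sum>l<D. if P l then 1 else 0 :: real)"
proof -
  have "(\<Sum>l<D. if P l then 1 else 0 :: real) = real (card ({..<D} \<inter> {l. P l}))"
    by (simp add: sum.If_cases)
  also have "{..<D} \<inter> {l. P l} = {l. l < D \<and> P l}" by auto
  finally show ?thesis by simp
qed

lemma delta_bound:
  fixes D L :: real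
  assumes D: "D > 0" and L: "L \<ge> 0"
  shows "4 * sqrt (6 * D * L) / D \<le> 10 * sqrt (L / D)"
proof -
  define x where "x = L / D"
  have x: "x \<ge> 0" using D L by (simp add: x_def)
  have e6: "6 * D * L = D\<^sup>2 * (6 * x)" using D by (simp add: x_def power2_eq_square)
  have "sqrt (6 * D * L) = sqrt (D\<^sup>2 * (6 * x))" by (simp only: e6)
  also have "\<dots> = sqrt (D\<^sup>2) * sqrt (6 * x)" by (rule real_sqrt_mult)
  also have "sqrt (D\<^sup>2) = D" using D by simp
  finally have "sqrt (6 * D * L) = D * sqrt (6 * x)" .
  then have eq: "4 * sqrt (6 * D * L) / D = 4 * sqrt (6 * x)" using D by simp
  have "(4 * sqrt (6 * x))\<^sup>2 \<le> (10 * sqrt x)\<^sup>2" using x by (simp add: power_mult_distrib)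
  then have "4 * sqrt (6 * x) \<le> 10 * sqrt x" by (rule power2_le_imp_le) (use x in simp)
  then show ?thesis using eq by (simp add: x_def)
qed

lemma main_n:
  fixes r k D m :: nat
  assumes r3: "3 \<le> r" and rk: "r \<le> k" and D: "D > 0"
    and er: "exp (- (real r - 1) / 8) \<le> 1 / real r"
    and small: "(1 + 140 / real r ^ 2) ^ m < 5/4"
  shows "1 - (real k * exp (- real D / 8) + 2 / real k + exp (- 2 * real D / real r ^ 2))
    \<le> subsets_prob k D (\<lambda>S.
          lambda_delta k D (10 * sqrt (ln (real k) / real D)) (topic_matrix S) \<le> 1
          \<and> (\<forall>alg :: nat list \<Rightarrow> nat set pmf.
               \<exists>x \<in> prob_simplex k.
                 card (supp k x) \<le> r \<and>
                 (\<forall>i \<in> supp k x. x i \<ge> 1 / real r) \<and>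
                 output_prob k D m (topic_matrix S) alg x (supp k x) < 3/4))"
    (is "_ \<le> subsets_prob k D ?E")
proof -
  define L where "L = ln (real k)"
  have kpos: "real k \<ge> 3" using r3 rk by simp
  have L0: "L \<ge> 0" using kpos by (simp add: L_def)
  define t where "t = sqrt (6 * real D * L)"
  have Dp: "real D > 0" using D by simp
  have t0: "t \<ge> 0" using Dp L0 by (simp add: t_def)
  define good where "good \<omega> \<longleftrightarrow>
      (\<forall>j<k. real D < 4 * (\<Sum>l<D. if \<omega> l j then 1 else 0)) \<and>
      (\<forall>i<k. \<forall>j<k. i \<noteq> j \<longrightarrow> \<bar>\<Sum>l<D. if \<omega> l j then (if \<omega> l i then 1 else -1) else 0\<bar> < t) \<and>
      (\<Sum>l<D. if real (card {i. i < r - 1 \<and> \<omega> l i}) \<le> (real r - 1) / 4 then 1 else 0)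
         < real D * exp (- (real r - 1) / 8) + real D / real r" for \<omega> :: "nat \<Rightarrow> nat \<Rightarrow> bool"
  have imp: "?E (Tr k D \<omega>)" if g: "good \<omega>" for \<omega>
  proof -
    define S where "S = Tr k D \<omega>"
    have Si: "S i = {l. l < D \<and> \<omega> l i}" if "i < k" for i using that by (simp add: S_def Tr_def)
    have Ssub: "S i \<subseteq> {..<D}" if "i < k" for i using Si[OF that] by auto
    have cS: "real (card (S j)) = (\<Sum>l<D. if \<omega> l j then 1 else 0)" if "j < k" for j
      using Si[OF that] cnt by simp
    have big: "real D \<le> 4 * real (card (S j))" if j: "j < k" for j
      using g j unfolding good_def cS[OF j] by auto
    have pair: "\<bar>2 * real (card (S i \<inter> S j)) - real (card (S j))\<bar> \<le> t"
      if ij: "i < k" "j < k" "i \<noteq> j" for i j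
    proof -
      have "S i \<inter> S j = {l. l < D \<and> (\<omega> l i \<and> \<omega> l j)}" using Si ij by auto
      then have c2: "real (card (S i \<inter> S j)) = (\<Sum>l<D. if \<omega> l i \<and> \<omega> l j then 1 else 0)"
        using cnt by simp
      have "(\<Sum>l<D. if \<omega> l j then (if \<omega> l i then 1 else -1) else 0 :: real)
          = (\<Sum>l<D. 2 * (if \<omega> l i \<and> \<omega> l j then 1 else 0) - (if \<omega> l j then 1 else 0 :: real))"
        by (intro sum.cong) auto
      also have "\<dots> = 2 * real (card (S i \<inter> S j)) - real (card (S j))"
        unfolding c2 cS[OF ij(2)] by (simp add: sum_subtractf sum_distrib_left)
      finally show ?thesis using g ij unfolding good_def by force
    qed
    have lam: "lambda_delta k D (10 * sqrt (ln (real k) / real D)) (topic_matrix S) \<le> 1"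
    proof (rule part_i[where k=k and D=D and S=S and t=t])
      show "0 < k" using kpos by simp
      show "4 * t / real D \<le> 10 * sqrt (ln (real k) / real D)"
        unfolding t_def L_def[symmetric] using delta_bound[OF Dp L0] by simp
      show "0 \<le> 10 * sqrt (ln (real k) / real D)" using L0 Dp by (simp add: L_def)
    qed (use D Ssub big pair in auto)
    have ne: "S i \<noteq> {}" if "i < r" for i
    proof
      assume "S i = {}"
      then have "real D \<le> 0" using big[of i] that rk by simp
      then show False using Dp by simp
    qed
    have bad: "real (card {l. l < D \<and> real (card {i. i < r - 1 \<and> l \<in> S i}) \<le> (real r - 1) / 4})
              \<le> 2 * real D / real r"
    proof -
      have "{l. l < D \<and> real (card {i. i < r - 1 \<and> l \<in> S i}) \<le> (real r - 1) / 4}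
          = {l. l < D \<and> real (card {i. i < r - 1 \<and> \<omega> l i}) \<le> (real r - 1) / 4}"
      proof (intro Collect_cong conj_cong refl)
        fix l assume l: "l < D"
        have "{i. i < r - 1 \<and> l \<in> S i} = {i. i < r - 1 \<and> \<omega> l i}"
          using Si l rk r3 by auto
        then show "(real (card {i. i < r - 1 \<and> l \<in> S i}) \<le> (real r - 1) / 4) =
              (real (card {i. i < r - 1 \<and> \<omega> l i}) \<le> (real r - 1) / 4)" by simp
      qed
      also have "real (card \<dots>) < real D * exp (- (real r - 1) / 8) + real D / real r"
        using g unfolding good_def cnt by blast
      also have "\<dots> \<le> real D * (1 / real r) + real D / real r"
        using er Dp by (intro add_mono mult_left_mono) auto
      also have "\<dots> = 2 * real D / real r" by simp
      finally show ?thesis by simp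
    qed
    have "\<forall>alg :: nat list \<Rightarrow> nat set pmf. \<exists>x \<in> prob_simplex k.
                 card (supp k x) \<le> r \<and>
                 (\<forall>i \<in> supp k x. x i \<ge> 1 / real r) \<and>
                 output_prob k D m (topic_matrix S) alg x (supp k x) < 3/4"
    proof
      fix alg :: "nat list \<Rightarrow> nat set pmf"
      show "\<exists>x \<in> prob_simplex k.
                 card (supp k x) \<le> r \<and>
                 (\<forall>i \<in> supp k x. x i \<ge> 1 / real r) \<and>
                 output_prob k D m (topic_matrix S) alg x (supp k x) < 3/4"
        by (rule part_ii[OF r3 rk D Ssub ne big[of "r - 1"] bad small]) (use r3 rk in auto)
    qed
    then show ?thesis using lam by (simp add: S_def)
  qed
  let ?M = "measure_pmf (Omega k D)"
  have kk: "real k ^ 2 * (2 * exp (- t\<^sup>2 / (2 * real D))) = 2 / real k"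
  proof -
    have "t\<^sup>2 = 6 * real D * L" using Dp L0 by (simp add: t_def)
    then have "- t\<^sup>2 / (2 * real D) = real 3 * (- L)" using Dp by simp
    then have "exp (- t\<^sup>2 / (2 * real D)) = exp (- L) ^ 3" by (simp only: exp_of_nat_mult)
    also have "exp (- L) = 1 / real k" using kpos by (simp add: L_def exp_minus inverse_eq_divide)
    finally show ?thesis using kpos by (simp add: power2_eq_square power3_eq_cube)
  qed
  have "measure ?M {\<omega>. \<not> good \<omega>}
      \<le> real k * exp (- real D / 8) + real k ^ 2 * (2 * exp (- t\<^sup>2 / (2 * real D)))
       + exp (- 2 * real D / real r ^ 2)"
    unfolding good_def by (rule good_prob[OF r3 rk D t0])
  then have bnd: "measure ?M {\<omega>. \<not> good \<omega>} \<le> real k * exp (- real D / 8) + 2 / real k + exp (- 2 * real D / real r ^ 2)"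
    unfolding kk .
  have "measure ?M {\<omega>. good \<omega>} = measure ?M (space ?M - {\<omega>. \<not> good \<omega>})"
    by (intro arg_cong[where f="measure ?M"]) auto
  also have "\<dots> = 1 - measure ?M {\<omega>. \<not> good \<omega>}"
    by (intro measure_pmf.prob_compl) auto
  finally have "1 - (real k * exp (- real D / 8) + 2 / real k + exp (- 2 * real D / real r ^ 2))
      \<le> measure ?M {\<omega>. good \<omega>}" using bnd by simp
  also have "\<dots> \<le> measure ?M {\<omega>. ?E (Tr k D \<omega>)}"
    using imp by (intro measure_pmf.finite_measure_mono) auto
  also have "\<dots> = subsets_prob k D ?E" by (simp add: subsets_prob_eq)
  finally show ?thesis .
qed

lemma exp_bound_r:
  fixes x :: real
  assumes x: "x \<ge> 226"
  shows "exp (- (x - 1) / 8) \<le> 1 / x"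
proof -
  have y: "(x - 1) / 16 \<ge> 0" using x by simp
  have "(1 + (x - 1) / 16)^2 \<le> exp ((x - 1) / 16) ^ 2"
    by (intro power_mono exp_ge_add_one_self) (use y in simp)
  also have "exp ((x - 1) / 16) ^ 2 = exp ((x - 1) / 8)"
    by (simp add: power2_eq_square exp_add[symmetric])
  finally have a: "(1 + (x - 1) / 16)^2 \<le> exp ((x - 1) / 8)" .
  have "x \<le> (1 + (x - 1) / 16)^2"
  proof -
    have "(1 + (x - 1) / 16)^2 = (x + 15)^2 / 256" by (simp add: power2_eq_square field_simps)
    moreover have "256 * x \<le> (x + 15)^2"
    proof -
      have "226 * x \<le> x * x" using x by (intro mult_right_mono) auto
      then show ?thesis by (simp add: power2_eq_square algebra_simps)
    qed
    ultimately show ?thesis by simp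
  qed
  with a have b: "x \<le> exp ((x - 1) / 8)" by linarith
  have "exp (- (x - 1) / 8) = exp (- ((x - 1) / 8))" by (simp only: minus_divide_left)
  also have "\<dots> = 1 / exp ((x - 1) / 8)" by (simp add: exp_minus inverse_eq_divide)
  also have "\<dots> \<le> 1 / x" using b x by (intro divide_left_mono) auto
  finally show ?thesis .
qed

lemma exp_neg_lim:
  fixes f :: "nat \<Rightarrow> real"
  assumes f: "filterlim f at_top sequentially" and c: "c > 0"
  shows "((\<lambda>n. exp (- (c * f n))) \<longlongrightarrow> 0) sequentially"
proof -
  have "filterlim (\<lambda>n. c * f n) at_top sequentially"
    by (rule filterlim_tendsto_pos_mult_at_top[OF tendsto_const c f])
  then have "filterlim (\<lambda>n. - (c * f n)) at_bot sequentially"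
    by (rule filterlim_compose[OF filterlim_uminus_at_bot_at_top])
  then show ?thesis by (rule filterlim_compose[OF exp_at_bot])
qed

theorem theorem6p1:
  shows "\<exists>c::real. c > 0 \<and>
    (\<forall>(r::nat \<Rightarrow> nat) (k::nat \<Rightarrow> nat) (D::nat \<Rightarrow> nat) (m::nat \<Rightarrow> nat).
      (\<forall>n. r n \<le> k n) \<and>
      filterlim (\<lambda>n. real (r n)) at_top sequentially \<and>
      filterlim (\<lambda>n. real (D n) / real (r n) ^ 2) at_top sequentially \<and>
      ((\<lambda>n. ln (real (k n)) / real (D n)) \<longlongrightarrow> 0) sequentially \<and>
      ((\<lambda>n. real (m n) / real (r n) ^ 2) \<longlongrightarrow> 0) sequentially
      \<longrightarrow>
      ((\<lambda>n. subsets_prob (k n) (D n) (\<lambda>S.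
          lambda_delta (k n) (D n) (c * sqrt (ln (real (k n)) / real (D n)))
              (topic_matrix S) \<le> 1
          \<and> (\<forall>alg :: nat list \<Rightarrow> nat set pmf.
               \<exists>x \<in> prob_simplex (k n).
                 card (supp (k n) x) \<le> r n \<and>
                 (\<forall>i \<in> supp (k n) x. x i \<ge> 1 / real (r n)) \<and>
                 output_prob (k n) (D n) (m n) (topic_matrix S) alg x (supp (k n) x) < 3/4)))
       \<longlongrightarrow> 1) sequentially)"
proof (intro exI[of _ "10::real"] conjI allI impI)
  show "(0::real) < 10" by simp
  fix r k D m :: "nat \<Rightarrow> nat"
  assume H: "(\<forall>n. r n \<le> k n) \<and>
      filterlim (\<lambda>n. real (r n)) at_top sequentially \<and>
      filterlim (\<lambda>n. real (D n) / real (r n) ^ 2) at_top sequentially \<and>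
      ((\<lambda>n. ln (real (k n)) / real (D n)) \<longlongrightarrow> 0) sequentially \<and>
      ((\<lambda>n. real (m n) / real (r n) ^ 2) \<longlongrightarrow> 0) sequentially"
  then have rk: "\<And>n. r n \<le> k n"
    and hr: "filterlim (\<lambda>n. real (r n)) at_top sequentially"
    and hD: "filterlim (\<lambda>n. real (D n) / real (r n) ^ 2) at_top sequentially"
    and hk: "((\<lambda>n. ln (real (k n)) / real (D n)) \<longlongrightarrow> 0) sequentially"
    and hm: "((\<lambda>n. real (m n) / real (r n) ^ 2) \<longlongrightarrow> 0) sequentially"
    by auto
  define sp where "sp n = subsets_prob (k n) (D n) (\<lambda>S.
          lambda_delta (k n) (D n) (10 * sqrt (ln (real (k n)) / real (D n)))
              (topic_matrix S) \<le> 1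
          \<and> (\<forall>alg :: nat list \<Rightarrow> nat set pmf.
               \<exists>x \<in> prob_simplex (k n).
                 card (supp (k n) x) \<le> r n \<and>
                 (\<forall>i \<in> supp (k n) x. x i \<ge> 1 / real (r n)) \<and>
                 output_prob (k n) (D n) (m n) (topic_matrix S) alg x (supp (k n) x) < 3/4))" for n
  define bnd where "bnd n = real (k n) * exp (- real (D n) / 8) + 2 / real (k n)
      + exp (- 2 * real (D n) / real (r n) ^ 2)" for n
  have ev_r3: "eventually (\<lambda>n. 3 \<le> r n) sequentially"
  proof -
    have "eventually (\<lambda>n. 3 \<le> real (r n)) sequentially" using hr unfolding filterlim_at_top by blast
    then show ?thesis by (rule eventually_mono) simp
  qed
  have ev_D1: "eventually (\<lambda>n. 1 \<le> real (D n) / real (r n) ^ 2) sequentially"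
    using hD unfolding filterlim_at_top by blast
  have ev_D: "eventually (\<lambda>n. D n > 0) sequentially"
    using ev_D1
  proof (rule eventually_mono)
    fix n assume a: "1 \<le> real (D n) / real (r n) ^ 2"
    show "D n > 0"
    proof (rule ccontr)
      assume "\<not> D n > 0"
      then have "D n = 0" by simp
      then show False using a by simp
    qed
  qed
  have ev_er: "eventually (\<lambda>n. exp (- (real (r n) - 1) / 8) \<le> 1 / real (r n)) sequentially"
  proof -
    have "eventually (\<lambda>n. 226 \<le> real (r n)) sequentially" using hr unfolding filterlim_at_top by blast
    then show ?thesis by (rule eventually_mono) (rule exp_bound_r)
  qed
  have ev_small: "eventually (\<lambda>n. (1 + 140 / real (r n) ^ 2) ^ m n < 5/4) sequentially"
  proof -
    have "((\<lambda>n. exp (140 * (real (m n) / real (r n) ^ 2))) \<longlongrightarrow> exp (140 * 0)) sequentially"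
      using hm by (intro tendsto_intros)
    then have "eventually (\<lambda>n. exp (140 * (real (m n) / real (r n) ^ 2)) < 5/4) sequentially"
      by (intro order_tendstoD(2)) auto
    then show ?thesis
    proof (rule eventually_mono)
      fix n assume a: "exp (140 * (real (m n) / real (r n) ^ 2)) < 5/4"
      have "(1 + 140 / real (r n) ^ 2) ^ m n \<le> exp (140 / real (r n) ^ 2) ^ m n"
        by (intro power_mono exp_ge_add_one_self) simp
      also have "\<dots> = exp (real (m n) * (140 / real (r n) ^ 2))" by (simp only: exp_of_nat_mult)
      also have "real (m n) * (140 / real (r n) ^ 2) = 140 * (real (m n) / real (r n) ^ 2)" by simp
      finally show "(1 + 140 / real (r n) ^ 2) ^ m n < 5/4" using a by simp
    qed
  qed
  have ev_low: "eventually (\<lambda>n. 1 - bnd n \<le> sp n) sequentially"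
    using ev_r3 ev_D ev_er ev_small
  proof eventually_elim
    case (elim n)
    show ?case unfolding bnd_def sp_def by (rule main_n[OF elim(1) rk[of n] elim(2) elim(3) elim(4)])
  qed
  have ev_up: "eventually (\<lambda>n. sp n \<le> 1) sequentially"
  proof (intro always_eventually allI)
    fix n show "sp n \<le> 1" unfolding sp_def subsets_prob_eq by (rule measure_pmf.prob_le_1)
  qed
  have Dinf: "filterlim (\<lambda>n. real (D n)) at_top sequentially"
  proof (rule filterlim_at_top_mono[OF hD])
    show "eventually (\<lambda>n. real (D n) / real (r n) ^ 2 \<le> real (D n)) sequentially"
      using ev_r3
    proof (rule eventually_mono)
      fix n assume "3 \<le> r n"
      then have "1 \<le> real (r n)" by simp
      then have "1 \<le> real (r n) ^ 2" by (rule one_le_power)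
      then show "real (D n) / real (r n) ^ 2 \<le> real (D n)"
        by (simp add: divide_le_eq mult_le_cancel_left1)
    qed
  qed
  have kinf: "filterlim (\<lambda>n. real (k n)) at_top sequentially"
    by (rule filterlim_at_top_mono[OF hr]) (simp add: rk)
  have l1: "((\<lambda>n. real (k n) * exp (- real (D n) / 8)) \<longlongrightarrow> 0) sequentially"
  proof (rule tendsto_sandwich[of "\<lambda>_. 0" _ _ "\<lambda>n. exp (- real (D n) / 16)"])
    show "eventually (\<lambda>n. 0 \<le> real (k n) * exp (- real (D n) / 8)) sequentially" by simp
    have "eventually (\<lambda>n. ln (real (k n)) / real (D n) < 1/16) sequentially"
      using hk by (intro order_tendstoD(2)) auto
    then show "eventually (\<lambda>n. real (k n) * exp (- real (D n) / 8) \<le> exp (- real (D n) / 16)) sequentially"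
      using ev_D ev_r3
    proof eventually_elim
      case (elim n)
      have Dp: "real (D n) > 0" using elim by simp
      have kp: "real (k n) > 0" using elim rk[of n] by simp
      have "ln (real (k n)) < real (D n) / 16" using elim(1) Dp by (simp add: divide_less_eq)
      then have "ln (real (k n)) - real (D n) / 8 \<le> - real (D n) / 16" by simp
      then have "exp (ln (real (k n)) - real (D n) / 8) \<le> exp (- real (D n) / 16)" by simp
      moreover have "exp (ln (real (k n)) - real (D n) / 8) = real (k n) * exp (- real (D n) / 8)"
      proof -
        have "exp (ln (real (k n)) - real (D n) / 8) = exp (ln (real (k n)) + (- real (D n) / 8))"
          by simp
        also have "\<dots> = exp (ln (real (k n))) * exp (- real (D n) / 8)" by (rule exp_add)
        also have "exp (ln (real (k n))) = real (k n)" using kp by (rule exp_ln)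
        finally show ?thesis .
      qed
      ultimately show ?case by simp
    qed
    show "((\<lambda>n. exp (- real (D n) / 16)) \<longlongrightarrow> 0) sequentially"
      using exp_neg_lim[OF Dinf, of "1/16"] by simp
  qed simp
  have l2: "((\<lambda>n. 2 / real (k n)) \<longlongrightarrow> 0) sequentially"
    by (rule tendsto_divide_0[OF tendsto_const filterlim_at_top_imp_at_infinity[OF kinf]])
  have l3: "((\<lambda>n. exp (- 2 * real (D n) / real (r n) ^ 2)) \<longlongrightarrow> 0) sequentially"
    using exp_neg_lim[OF hD, of 2] by simp
  have lb: "((\<lambda>n. 1 - bnd n) \<longlongrightarrow> 1) sequentially"
  proof -
    have "(bnd \<longlongrightarrow> 0 + 0 + 0) sequentially"
      unfolding bnd_def by (intro tendsto_add l1 l2 l3)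
    then have "((\<lambda>n. 1 - bnd n) \<longlongrightarrow> 1 - (0 + 0 + 0)) sequentially"
      by (intro tendsto_diff tendsto_const)
    then show ?thesis by simp
  qed
  have "(sp \<longlongrightarrow> 1) sequentially"
    by (rule tendsto_sandwich[OF ev_low ev_up lb tendsto_const])
  then show "((\<lambda>n. subsets_prob (k n) (D n) (\<lambda>S.
          lambda_delta (k n) (D n) (10 * sqrt (ln (real (k n)) / real (D n)))
              (topic_matrix S) \<le> 1
          \<and> (\<forall>alg :: nat list \<Rightarrow> nat set pmf.
               \<exists>x \<in> prob_simplex (k n).
                 card (supp (k n) x) \<le> r n \<and>
                 (\<forall>i \<in> supp (k n) x. x i \<ge> 1 / real (r n)) \<and>
                 output_prob (k n) (D n) (m n) (topic_matrix S) alg x (supp (k n) x) < 3/4)))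
       \<longlongrightarrow> 1) sequentially"
    unfolding sp_def .
qed

end
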